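(* Let $\Delta_0\subset\mathbb{R}^d$ be the vertex set of a regular simplex of edge length $1$ with centroid at the origin. There exists $\varepsilon_0>0$ such that for every $\tau\in\mathbb{R}^d$ and $R\in O(d)$ with $\|\tau\|_2+\|R-I_d\|_2\le\varepsilon_0$, writing $\Delta'=\{Rx+\tau: x\in\Delta_0\}$, \[ \mathrm{dist}_H(\Delta_0,\Delta')\;\le\; d^2(d+1)\,\bigl(\mathrm{diam}(\Delta_0\cup\Delta')-1\bigr). \]
   Context: A regular simplex of edge length $1$ is given by its vertex set: $d+1$ points at pairwise distance exactly $1$. $\|\cdot\|_2$ on matrices is the operator norm. $\mathrm{diam}(A)=\sup_{x,y\in A}\|x-y\|_2$. For nonempty compact $A,B\subset\mathbb{R}^d$, $\mathrm{dist}_H(A,B)=\max\{\sup_{a\in A}\inf_{b\in B}\|a-b\|_2,\ \sup_{b\in B}\inf_{a\in A}\|a-b\|_2\}$. *)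

theory Defs
  imports "HOL-Analysis.Analysis"
begin

definition dist_H :: "'a::metric_space set \<Rightarrow> 'a set \<Rightarrow> real" where
  "dist_H A B = max (SUP a\<in>A. infdist a B) (SUP b\<in>B. infdist b A)"

definition regular_unit_simplex :: "(real^'n) set \<Rightarrow> bool" where
  "regular_unit_simplex S \<longleftrightarrow> finite S \<and> card S = CARD('n) + 1 \<and>
     (\<forall>x\<in>S. \<forall>y\<in>S. x \<noteq> y \<longrightarrow> dist x y = 1)"

definition centroid :: "(real^'n) set \<Rightarrow> real^'n" where
  "centroid S = (1 / real (card S)) *\<^sub>R (\<Sum>x\<in>S. x)"

end

theory Submission
  imports Defs
begin


lemma gram_sum:
  fixes B :: "'a::euclidean_space set"
  assumes fin: "finite B" and nb: "\<forall>b\<in>B. b \<bullet> b = 1"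
    and ob: "\<forall>b\<in>B. \<forall>b'\<in>B. b \<noteq> b' \<longrightarrow> b \<bullet> b' = 1/2" and b'B: "b' \<in> B"
  shows "(\<Sum>b\<in>B. c b *\<^sub>R b) \<bullet> b' = (c b' + sum c B) / 2"
proof -
  have "(\<Sum>b\<in>B. c b *\<^sub>R b) \<bullet> b' = (\<Sum>b\<in>B. c b * (b \<bullet> b'))"
    by (simp add: inner_sum_left)
  also have "\<dots> = c b' * (b' \<bullet> b') + (\<Sum>b\<in>B-{b'}. c b * (b \<bullet> b'))"
    using fin b'B by (simp add: sum.remove)
  also have "(\<Sum>b\<in>B-{b'}. c b * (b \<bullet> b')) = (\<Sum>b\<in>B-{b'}. c b / 2)"
    using ob b'B by (intro sum.cong) auto
  also have "\<dots> = (sum c B - c b') / 2"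
    using fin b'B by (simp add: sum_divide_distrib[symmetric] sum_diff1)
  finally show ?thesis using nb b'B by (simp add: field_simps)
qed

lemma gram_indep:
  fixes B :: "'a::euclidean_space set"
  assumes fin: "finite B" and nb: "\<forall>b\<in>B. b \<bullet> b = 1"
    and ob: "\<forall>b\<in>B. \<forall>b'\<in>B. b \<noteq> b' \<longrightarrow> b \<bullet> b' = 1/2"
  shows "independent B"
proof
  assume "dependent B"
  then obtain c where c: "\<exists>v\<in>B. c v \<noteq> 0" "(\<Sum>v\<in>B. c v *\<^sub>R v) = 0"
    using dependent_finite[OF fin] by blast
  have e: "c b' = - sum c B" if "b' \<in> B" for b'
    using gram_sum[OF fin nb ob that, of c] c(2) by simp
  have "sum c B = (\<Sum>b\<in>B. - sum c B)" by (rule sum.cong[OF refl e])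
  also have "(\<Sum>b\<in>B. - sum c B) = - (real (card B) * sum c B)" by simp
  finally have eq: "sum c B = - (real (card B) * sum c B)" .
  have "sum c B * (1 + real (card B)) = sum c B + real (card B) * sum c B"
    by (simp add: algebra_simps)
  hence "sum c B * (1 + real (card B)) = 0" using eq by linarith
  hence "sum c B = 0" by (simp add: add_nonneg_eq_0_iff)
  moreover obtain v where "v \<in> B" "c v \<noteq> 0" using c(1) by blast
  moreover from this(1) have "c v = - sum c B" by (rule e)
  ultimately show False by linarith
qed

lemma gram_bound:
  fixes B :: "'a::euclidean_space set"
  assumes fin: "finite B" and nb: "\<forall>b\<in>B. b \<bullet> b = 1"
    and ob: "\<forall>b\<in>B. \<forall>b'\<in>B. b \<noteq> b' \<longrightarrow> b \<bullet> b' = 1/2"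
    and sp: "u \<in> span B" and E: "\<forall>b\<in>B. \<bar>b \<bullet> u\<bar> \<le> E"
  shows "(norm u)^2 \<le> 2 * real (card B) * E^2"
proof -
  obtain c where u: "u = (\<Sum>b\<in>B. c b *\<^sub>R b)" using sp span_finite[OF fin] by auto
  define a where "a b = b \<bullet> u" for b
  have ab: "a b = (c b + sum c B) / 2" if "b \<in> B" for b
    using gram_sum[OF fin nb ob that, of c] u by (simp add: a_def inner_commute)
  have "sum a B = (\<Sum>b\<in>B. (c b + sum c B) / 2)" using ab by (intro sum.cong) auto
  hence sa: "sum c B = 2 * sum a B / (1 + real (card B))"
    by (simp add: sum_divide_distrib[symmetric] sum.distrib field_simps)
  have "(norm u)^2 = u \<bullet> u" by (simp add: power2_norm_eq_inner)
  also have "\<dots> = (\<Sum>b\<in>B. c b * a b)" unfolding a_def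
    by (subst (1) u) (simp add: inner_sum_left)
  also have "\<dots> = (\<Sum>b\<in>B. (2 * a b - sum c B) * a b)"
    using ab by (intro sum.cong) (auto simp: field_simps)
  also have "\<dots> = 2 * (\<Sum>b\<in>B. (a b)^2) - sum c B * sum a B"
  proof -
    have "(\<Sum>b\<in>B. (2 * a b - sum c B) * a b) = (\<Sum>b\<in>B. 2 * (a b)^2 - sum c B * a b)"
      by (intro sum.cong) (auto simp: power2_eq_square algebra_simps)
    also have "\<dots> = 2 * (\<Sum>b\<in>B. (a b)^2) - sum c B * sum a B"
      by (simp add: sum_subtractf sum_distrib_left)
    finally show ?thesis .
  qed
  also have "\<dots> = 2 * (\<Sum>b\<in>B. (a b)^2) - 2 * (sum a B)^2 / (1 + real (card B))"
    by (simp add: sa power2_eq_square)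
  also have "\<dots> \<le> 2 * (\<Sum>b\<in>B. (a b)^2)" by simp
  also have "\<dots> \<le> 2 * (\<Sum>b\<in>B. E^2)"
  proof -
    have "(a b)^2 \<le> E^2" if "b \<in> B" for b
      using E that unfolding a_def by (simp add: abs_le_square_iff[symmetric]) (smt (verit) abs_ge_zero)
    hence "(\<Sum>b\<in>B. (a b)^2) \<le> (\<Sum>b\<in>B. E^2)" by (rule sum_mono)
    thus ?thesis by simp
  qed
  finally show ?thesis by simp
qed

lemma key_ineq:
  fixes b p q :: "'a::real_inner"
  assumes "norm b = 1" "norm (b + p - q) = 1" "norm (b + p) \<le> 1 + \<delta>" "norm (b - q) \<le> 1 + \<delta>"
    "norm p \<le> m" "norm q \<le> m" "0 \<le> \<delta>"
  shows "\<bar>b \<bullet> p\<bar> \<le> \<delta> + \<delta>^2/2 + 3/2 * m^2"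
proof -
  have m0: "0 \<le> m" using assms(5) norm_ge_zero order_trans by blast
  have bb: "b \<bullet> b = 1" using assms(1) by (simp add: norm_eq_1)
  have e1: "(b + p - q) \<bullet> (b + p - q) = 1" using assms(2) by (simp add: norm_eq_1)
  have e2: "(b + p) \<bullet> (b + p) \<le> (1 + \<delta>)^2"
    using assms(3) by (metis norm_ge_zero power2_norm_eq_inner power_mono)
  have e3: "(b - q) \<bullet> (b - q) \<le> (1 + \<delta>)^2"
    using assms(4) by (metis norm_ge_zero power2_norm_eq_inner power_mono)
  have pp: "p \<bullet> p \<le> m^2" using assms(5) by (metis norm_ge_zero power2_norm_eq_inner power_mono)
  have qq: "q \<bullet> q \<le> m^2" using assms(6) by (metis norm_ge_zero power2_norm_eq_inner power_mono)
  have pq: "\<bar>p \<bullet> q\<bar> \<le> m^2"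
  proof -
    have "\<bar>p \<bullet> q\<bar> \<le> norm p * norm q" by (rule Cauchy_Schwarz_ineq2)
    also have "\<dots> \<le> m * m" using assms(5,6) m0 by (intro mult_mono) auto
    finally show ?thesis by (simp add: power2_eq_square)
  qed
  have p0: "0 \<le> p \<bullet> p" by simp
  have q0: "0 \<le> q \<bullet> q" by simp
  have x1: "(b + p - q) \<bullet> (b + p - q) = b \<bullet> b + p \<bullet> p + q \<bullet> q + 2 * (b \<bullet> p) - 2 * (b \<bullet> q) - 2 * (p \<bullet> q)"
    by (simp add: algebra_simps inner_commute)
  have x2: "(b + p) \<bullet> (b + p) = b \<bullet> b + p \<bullet> p + 2 * (b \<bullet> p)"
    by (simp add: algebra_simps inner_commute)
  have x3: "(b - q) \<bullet> (b - q) = b \<bullet> b + q \<bullet> q - 2 * (b \<bullet> q)"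
    by (simp add: algebra_simps inner_commute)
  have sq: "(1 + \<delta>)^2 = 1 + 2 * \<delta> + \<delta>^2" by (simp add: power2_eq_square algebra_simps)
  have u1: "b \<bullet> p \<le> \<delta> + \<delta>^2/2 + 3/2 * m^2"
  proof -
    have "0 \<le> m^2" by simp
    thus ?thesis using bb e2 x2 sq p0 by linarith
  qed
  have u2: "- (b \<bullet> p) \<le> \<delta> + \<delta>^2/2 + 3/2 * m^2"
    using bb e1 e3 x1 x3 sq pp qq pq by (simp add: abs_le_iff)
  show ?thesis using u1 u2 by (simp add: abs_le_iff)
qed

lemma sqexp: "(x - y) \<bullet> (x - y) = x \<bullet> x + y \<bullet> y - 2 * (y \<bullet> (x::'a::real_inner))"
  by (simp add: algebra_simps inner_commute)

theorem mainTheorem12: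
  fixes \<Delta>0 :: "(real^'n) set"
  assumes "regular_unit_simplex \<Delta>0"
    and "centroid \<Delta>0 = 0"
  shows "\<exists>\<epsilon>0>0. \<forall>(\<tau>::real^'n) (R::real^'n^'n).
           orthogonal_matrix R \<and> norm \<tau> + onorm (\<lambda>x. (R - mat 1) *v x) \<le> \<epsilon>0 \<longrightarrow>
           dist_H \<Delta>0 ((\<lambda>x. R *v x + \<tau>) ` \<Delta>0)
             \<le> real (CARD('n))^2 * real (CARD('n) + 1)
                * (diameter (\<Delta>0 \<union> (\<lambda>x. R *v x + \<tau>) ` \<Delta>0) - 1)"
proof -
  define S where "S = \<Delta>0"
  define d where "d = real CARD('n)"
  have fin: "finite S" and cardS: "card S = CARD('n) + 1"
    and dist1: "\<And>x y. x \<in> S \<Longrightarrow> y \<in> S \<Longrightarrow> x \<noteq> y \<Longrightarrow> dist x y = 1"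
    using assms(1) unfolding regular_unit_simplex_def S_def by auto
  have d1: "1 \<le> d" unfolding d_def by simp
  have Sne: "S \<noteq> {}" using cardS by auto
  have sum0: "(\<Sum>x\<in>S. x) = 0"
    using assms(2) cardS unfolding centroid_def S_def by simp
  have dle1: "dist x y \<le> 1" if "x \<in> S" "y \<in> S" for x y
    using dist1[OF that] by (cases "x = y") auto
  have nle1: "norm x \<le> 1" if xS: "x \<in> S" for x
  proof -
    have "(\<Sum>y\<in>S. x - y) = real (card S) *\<^sub>R x"
      by (simp only: sum_subtractf sum_constant_scaleR sum0 diff_zero)
    hence "real (card S) * norm x = norm (\<Sum>y\<in>S. x - y)" by simp
    also have "\<dots> \<le> (\<Sum>y\<in>S. norm (x - y))" by (rule norm_sum)
    also have "\<dots> \<le> (\<Sum>y\<in>S. 1)"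
      using dle1[OF xS] by (intro sum_mono) (simp add: dist_norm)
    also have "\<dots> = real (card S)" by simp
    finally show ?thesis using cardS by simp
  qed
  define Bv where "Bv i = (\<lambda>j. i - j) ` (S - {i})" for i
  have Bfin: "finite (Bv i)" for i unfolding Bv_def using fin by simp
  have Bcard: "card (Bv i) = CARD('n)" if "i \<in> S" for i
  proof -
    have "inj_on (\<lambda>j. i - j) (S - {i})" by (auto simp: inj_on_def)
    hence "card (Bv i) = card (S - {i})" unfolding Bv_def by (rule card_image)
    thus ?thesis using cardS that fin by simp
  qed
  have Bnb: "\<forall>b\<in>Bv i. b \<bullet> b = 1" if "i \<in> S" for i
    using dist1 that unfolding Bv_def
    by (auto simp: dist_norm norm_eq_1[symmetric])
  have Bob: "\<forall>b\<in>Bv i. \<forall>b'\<in>Bv i. b \<noteq> b' \<longrightarrow> b \<bullet> b' = 1/2" if iS: "i \<in> S" for i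
  proof (intro ballI impI)
    fix b b' assume "b \<in> Bv i" "b' \<in> Bv i" "b \<noteq> b'"
    then obtain j k where jk: "j \<in> S" "k \<in> S" "j \<noteq> i" "k \<noteq> i" "j \<noteq> k" "b = i - j" "b' = i - k"
      unfolding Bv_def by auto
    have "(i - j) \<bullet> (i - j) = 1" "(i - k) \<bullet> (i - k) = 1" "(j - k) \<bullet> (j - k) = 1"
      using dist1 jk iS by (auto simp: dist_norm norm_eq_1[symmetric])
    moreover have "(j - k) \<bullet> (j - k) = (i - k) \<bullet> (i - k) + (i - j) \<bullet> (i - j) - 2 * ((i - j) \<bullet> (i - k))"
      using sqexp[of "i - k" "i - j"] by simp
    ultimately have "1 = 1 + 1 - 2 * ((i - j) \<bullet> (i - k))" by simp
    thus "b \<bullet> b' = 1/2" using jk by simp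
  qed
  have Bspan: "u \<in> span (Bv i)" if "i \<in> S" for i u
  proof -
    have ind: "independent (Bv i)" using gram_indep[OF Bfin Bnb[OF that] Bob[OF that]] .
    have "UNIV \<subseteq> span (Bv i)"
      by (rule card_ge_dim_independent[OF _ ind]) (use Bcard[OF that] in auto)
    thus ?thesis by auto
  qed
  define \<epsilon> where "\<epsilon> = 1 / (100 * d)"
  have \<epsilon>pos: "\<epsilon> > 0" unfolding \<epsilon>_def using d1 by simp
  have d\<epsilon>: "d * \<epsilon> = 1/100" unfolding \<epsilon>_def using d1 by simp
  have \<epsilon>le: "\<epsilon> \<le> 1/100"
  proof -
    have "1 * \<epsilon> \<le> d * \<epsilon>" using d1 \<epsilon>pos by (intro mult_right_mono) auto
    thus ?thesis using d\<epsilon> by simp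
  qed
  define K where "K = sqrt (2 * d)"
  have K0: "0 \<le> K" unfolding K_def using d1 by simp
  have Kle: "K \<le> 3/2 * d"
  proof -
    have "d * 1 \<le> d * d" using d1 by (intro mult_left_mono) auto
    hence "2 * d \<le> (3/2 * d)^2" using d1 by (simp add: power2_eq_square)
    thus ?thesis unfolding K_def using d1 by (intro real_le_lsqrt) auto
  qed
  show ?thesis
  proof (intro exI[of _ \<epsilon>] conjI allI impI)
    show "\<epsilon> > 0" by (rule \<epsilon>pos)
    fix \<tau> :: "real^'n" and R :: "real^'n^'n"
    assume H: "orthogonal_matrix R \<and> norm \<tau> + onorm (\<lambda>x. (R - mat 1) *v x) \<le> \<epsilon>"
    have orth: "orthogonal_transformation ((*v) R)"
      using H by (simp add: orthogonal_transformation_matrix)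
    define w where "w x = R *v x + \<tau>" for x
    define u where "u x = w x - x" for x
    have uform: "u x = (R - mat 1) *v x + \<tau>" for x
      by (simp add: u_def w_def matrix_vector_mult_diff_rdistrib)
    have on0: "0 \<le> onorm (\<lambda>x. (R - mat 1) *v x)"
      by (rule onorm_pos_le) (rule matrix_vector_mul_bounded_linear)
    have usmall: "norm (u x) \<le> \<epsilon>" if "x \<in> S" for x
    proof -
      have "norm (u x) \<le> norm ((R - mat 1) *v x) + norm \<tau>" unfolding uform by (rule norm_triangle_ineq)
      also have "norm ((R - mat 1) *v x) \<le> onorm (\<lambda>x. (R - mat 1) *v x) * norm x"
        by (rule onorm[OF matrix_vector_mul_bounded_linear])
      also have "\<dots> \<le> onorm (\<lambda>x. (R - mat 1) *v x) * 1"
        using nle1[OF that] on0 by (intro mult_left_mono) auto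
      finally show ?thesis using H by simp
    qed
    define T where "T = S \<union> w ` S"
    have bT: "bounded T" unfolding T_def using fin by (simp add: finite_imp_bounded)
    define D where "D = diameter T"
    define \<delta> where "\<delta> = D - 1"
    have dT: "dist x y \<le> D" if "x \<in> T" "y \<in> T" for x y
      unfolding D_def by (rule diameter_bounded_bound[OF bT that])
    have \<delta>0: "0 \<le> \<delta>"
    proof -
      obtain x where xS: "x \<in> S" using Sne by auto
      have "S - {x} \<noteq> {}"
      proof
        assume "S - {x} = {}"
        hence "S \<subseteq> {x}" by auto
        hence "card S \<le> 1" using card_mono[of "{x}" S] by simp
        thus False using cardS by simp
      qed
      then obtain y where "y \<in> S" "y \<noteq> x" by auto
      hence "x \<in> S" "y \<in> S" "x \<noteq> y" using xS by auto
      hence "1 \<le> D" using dT[of x y] dist1[of x y] unfolding T_def by auto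
      thus ?thesis unfolding \<delta>_def by simp
    qed
    define m where "m = Max ((\<lambda>x. norm (u x)) ` S)"
    have mge: "norm (u x) \<le> m" if "x \<in> S" for x
      unfolding m_def using fin that by (intro Max_ge) auto
    obtain i0 where i0: "i0 \<in> S" "m = norm (u i0)"
    proof -
      have "m \<in> (\<lambda>x. norm (u x)) ` S" unfolding m_def using fin Sne by (intro Max_in) auto
      thus ?thesis using that by auto
    qed
    have m\<epsilon>: "m \<le> \<epsilon>" using i0 usmall by simp
    have m0: "0 \<le> m" using i0 by simp
    have dH: "dist_H S (w ` S) \<le> m"
    proof -
      have 1: "(SUP a\<in>S. infdist a (w ` S)) \<le> m"
      proof (rule cSUP_least[OF Sne])
        fix x assume xS: "x \<in> S"
        have "infdist x (w ` S) \<le> dist x (w x)" using xS by (intro infdist_le) auto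
        also have "\<dots> = norm (u x)" by (simp add: u_def dist_norm norm_minus_commute)
        finally show "infdist x (w ` S) \<le> m" using mge[OF xS] by simp
      qed
      have 2: "(SUP b\<in>w ` S. infdist b S) \<le> m"
      proof (rule cSUP_least)
        show "w ` S \<noteq> {}" using Sne by simp
        fix y assume "y \<in> w ` S"
        then obtain x where xS: "x \<in> S" and y: "y = w x" by auto
        have "infdist y S \<le> dist y x" using xS by (intro infdist_le) auto
        also have "\<dots> = norm (u x)" by (simp add: u_def dist_norm y)
        finally show "infdist y S \<le> m" using mge[OF xS] by simp
      qed
      show ?thesis unfolding dist_H_def using 1 2 by simp
    qed
    define E where "E = \<delta> + \<delta>^2/2 + 3/2 * m^2"
    have E0: "0 \<le> E" unfolding E_def using \<delta>0 by simp
    have key: "norm (u i) \<le> K * E" if iS: "i \<in> S" for i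
    proof -
      have Eb: "\<forall>b\<in>Bv i. \<bar>b \<bullet> u i\<bar> \<le> E"
      proof
        fix b assume "b \<in> Bv i"
        then obtain j where j: "j \<in> S" "j \<noteq> i" "b = i - j" unfolding Bv_def by auto
        have nb: "norm b = 1" using dist1[OF iS j(1)] j by (simp add: dist_norm)
        have "(i - j) + u i - u j = R *v (i - j)"
          unfolding u_def w_def matrix_vector_mult_diff_distrib by (simp add: algebra_simps)
        hence "norm (b + u i - u j) = norm (R *v b)" using j by simp
        also have "\<dots> = 1" using orthogonal_transformation_norm[OF orth] nb by simp
        finally have n2: "norm (b + u i - u j) = 1" .
        have n3: "norm (b + u i) \<le> 1 + \<delta>"
        proof -
          have "b + u i = w i - j" unfolding j(3) u_def by (simp add: algebra_simps)
          hence "norm (b + u i) = dist (w i) j" by (simp add: dist_norm)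
          also have "\<dots> \<le> D" using iS j by (intro dT) (auto simp: T_def)
          finally show ?thesis unfolding \<delta>_def by simp
        qed
        have n4: "norm (b - u j) \<le> 1 + \<delta>"
        proof -
          have "b - u j = i - w j" unfolding j(3) u_def by (simp add: algebra_simps)
          hence "norm (b - u j) = dist i (w j)" by (simp add: dist_norm)
          also have "\<dots> \<le> D" using iS j by (intro dT) (auto simp: T_def)
          finally show ?thesis unfolding \<delta>_def by simp
        qed
        show "\<bar>b \<bullet> u i\<bar> \<le> E" unfolding E_def
          by (rule key_ineq[OF nb n2 n3 n4 mge[OF iS] mge[OF j(1)] \<delta>0])
      qed
      have "(norm (u i))^2 \<le> 2 * real (card (Bv i)) * E^2"
        by (rule gram_bound[OF Bfin Bnb[OF iS] Bob[OF iS] Bspan[OF iS] Eb])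
      hence "(norm (u i))^2 \<le> 2 * d * E^2" using Bcard[OF iS] by (simp add: d_def)
      hence "norm (u i) \<le> sqrt (2 * d * E^2)" by (rule real_le_rsqrt)
      also have "\<dots> = K * E" unfolding K_def using E0 by (simp add: real_sqrt_mult)
      finally show ?thesis .
    qed
    have C: "d * 2 \<le> d^2 * (d + 1)"
    proof -
      have "d * 1 \<le> d * d" using d1 by (intro mult_left_mono) auto
      moreover have "d * d * 2 \<le> d * d * (d + 1)" using d1 by (intro mult_left_mono) auto
      ultimately show ?thesis by (simp add: power2_eq_square)
    qed
    have main: "m \<le> d^2 * (d + 1) * \<delta>"
    proof (cases "\<epsilon> \<le> \<delta>")
      case True
      have "1 \<le> d^2 * (d + 1)" using C d1 by linarith
      hence "\<delta> \<le> d^2 * (d + 1) * \<delta>" using \<delta>0 by (simp add: mult_le_cancel_right1)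
      thus ?thesis using m\<epsilon> True by linarith
    next
      case False
      have "m \<le> K * E" using key[OF i0(1)] i0(2) by simp
      have a1: "K * (\<delta>^2/2) \<le> K * (\<delta> / 200)"
      proof -
        have "\<delta> \<le> 1/100" using False \<epsilon>le by simp
        hence "\<delta> * \<delta> \<le> \<delta> * (1/100)" using \<delta>0 by (intro mult_left_mono) auto
        hence "\<delta>^2 \<le> \<delta> * (1/100)" by (simp add: power2_eq_square)
        thus ?thesis using K0 by (intro mult_left_mono) auto
      qed
      have a2: "K * (3/2 * m^2) \<le> 3/2 * d * (3/2 * \<epsilon> * m)"
      proof -
        have "m^2 \<le> \<epsilon> * m" using m\<epsilon> m0 by (simp add: power2_eq_square mult_right_mono)
        hence "3/2 * m^2 \<le> 3/2 * \<epsilon> * m" by simp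
        hence "K * (3/2 * m^2) \<le> K * (3/2 * \<epsilon> * m)" using K0 by (intro mult_left_mono) auto
        also have "\<dots> \<le> 3/2 * d * (3/2 * \<epsilon> * m)" using Kle m0 \<epsilon>pos by (intro mult_right_mono) auto
        finally show ?thesis .
      qed
      have a3: "3/2 * d * (3/2 * \<epsilon> * m) = 9/400 * m" using d\<epsilon> by (simp add: algebra_simps)
      have "m \<le> K * \<delta> + K * (\<delta>^2/2) + K * (3/2 * m^2)"
        using \<open>m \<le> K * E\<close> unfolding E_def by (simp add: algebra_simps)
      hence "m \<le> K * \<delta> + K * (\<delta> / 200) + 9/400 * m" using a1 a2 a3 by linarith
      moreover have "K * (\<delta> / 200) = K * \<delta> / 200" by simp
      ultimately have "m * (391/400) \<le> K * \<delta> * (201/200)" by linarith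
      hence "m \<le> K * \<delta> * (402/391)" by simp
      also have "\<dots> \<le> 3/2 * d * \<delta> * (402/391)" using Kle \<delta>0 by (intro mult_right_mono) auto
      also have "\<dots> \<le> d * 2 * \<delta>" using d1 \<delta>0 by (simp add: mult_right_mono)
      also have "\<dots> \<le> d^2 * (d + 1) * \<delta>" using C \<delta>0 by (intro mult_right_mono) auto
      finally show ?thesis .
    qed
    show "dist_H \<Delta>0 ((\<lambda>x. R *v x + \<tau>) ` \<Delta>0)
             \<le> real (CARD('n))^2 * real (CARD('n) + 1)
                * (diameter (\<Delta>0 \<union> (\<lambda>x. R *v x + \<tau>) ` \<Delta>0) - 1)"
      using dH main unfolding S_def w_def[abs_def] T_def D_def \<delta>_def d_def
      by (simp add: add.commute)
  qed
qed

end
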